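(* Let $B_k$ ($k\ge2$) be a generalized Bethe tree with parameters $n_1,\dots,n_k$ and $d_1,\dots,d_k$, let $\alpha\in[0,1)$ and $\beta=1-\alpha$. Let $T_k$ be the $k\times k$ symmetric tridiagonal matrix with diagonal entries $\alpha,\ \alpha d_2,\ \dots,\ \alpha d_k$, with $(s-1,s)$ and $(s,s-1)$ entries $\beta\sqrt{d_s-1}$ for $s=2,\dots,k-1$, and with $(k-1,k)$ and $(k,k-1)$ entries $\beta\sqrt{d_k}$; let $T_j$ be its $j\times j$ leading principal submatrix ($j=1,\dots,k$). Then: (1) as a multiset, the spectrum of $A_\alpha(B_k)$ is obtained by taking each eigenvalue of $T_j$ with multiplicity $n_j-n_{j+1}$ for $1\le j\le k-1$, and each eigenvalue of $T_k$ with multiplicity $1$, and forming the multiset union (multiplicities of equal eigenvalues arising from different $T_j$ being added); (2) the largest eigenvalue of $T_k$ equals the largest eigenvalue of $A_\alpha(B_k)$.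
   Context: For a graph $G$, $A(G)$ is the adjacency matrix, $D(G)$ the diagonal degree matrix, and $A_\alpha(G)=\alpha D(G)+(1-\alpha)A(G)$. In a rooted tree, the level of a vertex is its distance to the root plus one. A generalized Bethe tree $B_k$ is a rooted tree with $k$ levels in which all vertices at the same level have the same degree. For $j\in\{1,\dots,k\}$, $n_{k-j+1}$ denotes the number of vertices at level $j$ and $d_{k-j+1}$ their common degree (so index $1$ refers to the deepest level and index $k$ to the root; $d_1=1$, $n_k=1$). *)

theory Defs
  imports "HOL-Computational_Algebra.Polynomial" "Jordan_Normal_Form.Char_Poly"
begin

definition simple_graph :: "nat \<Rightarrow> (nat \<Rightarrow> nat \<Rightarrow> bool) \<Rightarrow> bool" where
  "simple_graph N E \<longleftrightarrow> (\<forall>u v. E u v \<longrightarrow> u < N \<and> v < N \<and> u \<noteq> v \<and> E v u)"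

definition is_walk :: "(nat \<Rightarrow> nat \<Rightarrow> bool) \<Rightarrow> nat list \<Rightarrow> bool" where
  "is_walk E xs \<longleftrightarrow> xs \<noteq> [] \<and> (\<forall>i. Suc i < length xs \<longrightarrow> E (xs ! i) (xs ! Suc i))"

definition connected_graph :: "nat \<Rightarrow> (nat \<Rightarrow> nat \<Rightarrow> bool) \<Rightarrow> bool" where
  "connected_graph N E \<longleftrightarrow>
     (\<forall>u<N. \<forall>v<N. \<exists>xs. is_walk E xs \<and> hd xs = u \<and> last xs = v)"

definition has_cycle :: "(nat \<Rightarrow> nat \<Rightarrow> bool) \<Rightarrow> bool" where
  "has_cycle E \<longleftrightarrow> (\<exists>xs. is_walk E xs \<and> length xs \<ge> 3 \<and> distinct xs \<and> E (last xs) (hd xs))"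

definition is_tree :: "nat \<Rightarrow> (nat \<Rightarrow> nat \<Rightarrow> bool) \<Rightarrow> bool" where
  "is_tree N E \<longleftrightarrow> N \<ge> 1 \<and> simple_graph N E \<and> connected_graph N E \<and> \<not> has_cycle E"

definition gdist :: "(nat \<Rightarrow> nat \<Rightarrow> bool) \<Rightarrow> nat \<Rightarrow> nat \<Rightarrow> nat" where
  "gdist E u v = (LEAST m. \<exists>xs. is_walk E xs \<and> hd xs = u \<and> last xs = v \<and> length xs = Suc m)"

definition level :: "(nat \<Rightarrow> nat \<Rightarrow> bool) \<Rightarrow> nat \<Rightarrow> nat \<Rightarrow> nat" where
  "level E r v = gdist E r v + 1"

definition degree :: "nat \<Rightarrow> (nat \<Rightarrow> nat \<Rightarrow> bool) \<Rightarrow> nat \<Rightarrow> nat" where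
  "degree N E v = card {u. u < N \<and> E v u}"

definition gen_bethe_tree :: "nat \<Rightarrow> (nat \<Rightarrow> nat \<Rightarrow> bool) \<Rightarrow> nat \<Rightarrow> nat \<Rightarrow> bool" where
  "gen_bethe_tree N E r k \<longleftrightarrow>
     is_tree N E \<and> r < N \<and>
     k = Max ((level E r) ` {..<N}) \<and>
     (\<forall>u<N. \<forall>v<N. level E r u = level E r v \<longrightarrow> degree N E u = degree N E v)"

definition adj_mat :: "nat \<Rightarrow> (nat \<Rightarrow> nat \<Rightarrow> bool) \<Rightarrow> real mat" where
  "adj_mat N E = mat N N (\<lambda>(u, v). if E u v then 1 else 0)"

definition deg_mat :: "nat \<Rightarrow> (nat \<Rightarrow> nat \<Rightarrow> bool) \<Rightarrow> real mat" where
  "deg_mat N E = mat N N (\<lambda>(u, v). if u = v then real (degree N E u) else 0)"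

definition A_alpha :: "real \<Rightarrow> nat \<Rightarrow> (nat \<Rightarrow> nat \<Rightarrow> bool) \<Rightarrow> real mat" where
  "A_alpha \<alpha> N E = \<alpha> \<cdot>\<^sub>m deg_mat N E + (1 - \<alpha>) \<cdot>\<^sub>m adj_mat N E"

definition spectrum_mset :: "real mat \<Rightarrow> real multiset" where
  "spectrum_mset M = proots (char_poly M)"

(* T_j: the j x j leading principal submatrix of the k x k symmetric tridiagonal
   matrix T_k (indices below are 0-based; 1-based index s corresponds to s-1). *)
definition T_mat :: "real \<Rightarrow> (nat \<Rightarrow> nat) \<Rightarrow> nat \<Rightarrow> nat \<Rightarrow> real mat" where
  "T_mat \<alpha> d k j = mat j j (\<lambda>(a, b).
     if a = b then (if a = 0 then \<alpha> else \<alpha> * real (d (a + 1)))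
     else if b = a + 1 \<or> a = b + 1 then
       (let s = max a b + 1 in
        if s = k then (1 - \<alpha>) * sqrt (real (d k))
        else (1 - \<alpha>) * sqrt (real (d s) - 1))
     else 0)"

end

theory Submission
  imports Defs
begin


lemma det_hgen:
  fixes A :: "real mat" and h :: "nat \<Rightarrow> nat"
  assumes A: "A \<in> carrier_mat n n"
    and H: "\<And>i j. i < n \<Longrightarrow> j < n \<Longrightarrow> i \<noteq> j \<Longrightarrow> A $$ (i,j) \<noteq> 0 \<Longrightarrow> h i < h j"
  shows "det A = (\<Prod>i<n. A $$ (i,i))"
proof -
  have z: "(\<Prod>i = 0..<n. A $$ (i, p i)) = 0" if p: "p permutes {0..<n}" and pid: "p \<noteq> id" for p
  proof (rule ccontr)
    assume nz: "(\<Prod>i = 0..<n. A $$ (i, p i)) \<noteq> 0"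
    have nz': "A $$ (i, p i) \<noteq> 0" if "i < n" for i using nz that by auto
    define S where "S = {i. i < n \<and> p i \<noteq> i}"
    have fS: "finite S" unfolding S_def by auto
    obtain i0 where "p i0 \<noteq> i0" using pid by (meson eq_id_iff)
    hence "i0 < n" using p permutes_def by (metis atLeastLessThan_iff zero_le)
    hence "S \<noteq> {}" using \<open>p i0 \<noteq> i0\<close> unfolding S_def by auto
    define m where "m = Max (h ` S)"
    have "m \<in> h ` S" unfolding m_def using fS \<open>S \<noteq> {}\<close> by simp
    then obtain i where iS: "i \<in> S" and hi: "h i = m" by auto
    have imax: "h j \<le> h i" if "j \<in> S" for j using hi fS that unfolding m_def by simp
    have i: "i < n" "p i \<noteq> i" using iS S_def by auto
    have pin: "p i < n" using permutes_in_image[OF p, of i] i by simp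
    have "p (p i) \<noteq> p i" using i(2) p by (metis permutes_inj injD)
    hence "p i \<in> S" using pin S_def by auto
    moreover have "h i < h (p i)" using H[OF i(1) pin] i nz'[OF i(1)] by auto
    ultimately show False using imax[of "p i"] by simp
  qed
  have "det A = (\<Sum>p \<in> {p. p permutes {0..<n}}. signof p * (\<Prod>i = 0..<n. A $$ (i, p i)))"
    by (rule det_def'[OF A])
  also have "\<dots> = signof (id::nat\<Rightarrow>nat) * (\<Prod>i = 0..<n. A $$ (i, id i))"
    apply (subst sum.remove[of _ id])
    using permutes_id apply (auto simp: finite_permutations)[2]
    apply (subst sum.neutral) using z by auto
  also have "\<dots> = (\<Prod>i<n. A $$ (i,i))" by (simp add: atLeast0LessThan)
  finally show ?thesis .
qed

lemma ldl_det:
  fixes M :: "real mat" and f :: "nat \<Rightarrow> real" and par h :: "nat \<Rightarrow> nat"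
  assumes M: "M \<in> carrier_mat n n"
    and sym: "\<And>i j. i<n \<Longrightarrow> j<n \<Longrightarrow> M$$(i,j) = M$$(j,i)"
    and par: "\<And>i. i<n \<Longrightarrow> par i \<noteq> i \<Longrightarrow> par i < n \<and> h i < h (par i)"
    and zero: "\<And>i j. i<n \<Longrightarrow> j<n \<Longrightarrow> i \<noteq> j \<Longrightarrow> j \<noteq> par i \<Longrightarrow> i \<noteq> par j \<Longrightarrow> M$$(i,j) = 0"
    and fnz: "\<And>i. i<n \<Longrightarrow> par i \<noteq> i \<Longrightarrow> f i \<noteq> 0"
    and diag: "\<And>v. v<n \<Longrightarrow> M$$(v,v) = f v + (\<Sum>c\<in>{c. c<n \<and> par c \<noteq> c \<and> par c = v}. M$$(c,v)^2 / f c)"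
  shows "det M = (\<Prod>v<n. f v)"
proof -
  define U where "U = mat n n (\<lambda>(i,j). if i = j then 1 else if par i \<noteq> i \<and> j = par i then M$$(i,j)/f i else 0)"
  define D where "D = mat n n (\<lambda>(i,j). if i = j then f i else (0::real))"
  have Uij: "U$$(i,j) = (if i = j then 1 else if par i \<noteq> i \<and> j = par i then M$$(i,j)/f i else 0)"
    if "i<n" "j<n" for i j using that unfolding U_def by simp
  have Dij: "D$$(i,j) = (if i = j then f i else 0)" if "i<n" "j<n" for i j using that unfolding D_def by simp
  have U: "U \<in> carrier_mat n n" and D: "D \<in> carrier_mat n n" unfolding U_def D_def by auto
  have DU: "D * U = mat n n (\<lambda>(i,j). f i * U$$(i,j))"
  proof (rule eq_matI)
    fix i j assume "i < dim_row (mat n n (\<lambda>(i,j). f i * U$$(i,j)))" "j < dim_col (mat n n (\<lambda>(i,j). f i * U$$(i,j)))"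
    hence ij: "i < n" "j < n" by auto
    have "(D * U) $$ (i,j) = (\<Sum>k\<in>{0..<n}. D$$(i,k) * U$$(k,j))"
      using ij D U by (simp add: scalar_prod_def)
    also have "\<dots> = (\<Sum>k\<in>{0..<n}. if k = i then f i * U$$(i,j) else 0)"
      proof (rule sum.cong)
      fix x assume "x \<in> {0..<n}" thus "D$$(i,x) * U$$(x,j) = (if x = i then f i * U$$(i,j) else 0)" using ij by (simp add: Dij)
    qed simp
    also have "\<dots> = f i * U$$(i,j)" using ij by simp
    finally show "(D * U) $$ (i,j) = mat n n (\<lambda>(i,j). f i * U$$(i,j)) $$ (i,j)" using ij by simp
  qed (use D U in auto)
  have MU: "M = transpose_mat U * (D * U)"
  proof (rule eq_matI)
    fix u v assume "u < dim_row (transpose_mat U * (D * U))" "v < dim_col (transpose_mat U * (D * U))"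
    hence uv: "u < n" "v < n" using U D by auto
    have e: "(transpose_mat U * (D * U)) $$ (u,v) = (\<Sum>w\<in>{0..<n}. U$$(w,u) * (f w * U$$(w,v)))"
      using uv U D by (simp add: scalar_prod_def DU)
    show "M $$ (u,v) = (transpose_mat U * (D * U)) $$ (u,v)"
    proof (cases "u = v")
      case True
      have "(\<Sum>w\<in>{0..<n}. U$$(w,u) * (f w * U$$(w,v))) =
            (\<Sum>w\<in>{0..<n}. (if w = v then f v else 0) + (if par w \<noteq> w \<and> par w = v then M$$(w,v)^2 / f w else 0))"
      proof (rule sum.cong)
        fix w assume w: "w \<in> {0..<n}"
        show "U$$(w,u) * (f w * U$$(w,v)) = (if w = v then f v else 0) + (if par w \<noteq> w \<and> par w = v then M$$(w,v)^2 / f w else 0)"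
          proof (cases "w = v")
          case True2: True
          have "U$$(v,v) = 1" using uv Uij[of v v] by simp
          thus ?thesis using True True2 by simp
        next
          case False2: False
          have wn: "w < n" using w by simp
          have e1: "U$$(w,v) = (if par w \<noteq> w \<and> v = par w then M$$(w,v)/f w else 0)"
            using Uij[OF wn uv(2)] False2 by simp
          show ?thesis
          proof (cases "par w \<noteq> w \<and> par w = v")
            case c: True
            have "f w \<noteq> 0" using fnz[OF wn] c by simp
            thus ?thesis using c e1 True False2 by (simp add: power2_eq_square)
          next
            case c: False
            thus ?thesis using e1 True False2 by auto
          qed
        qed
      qed simp
      also have "\<dots> = f v + (\<Sum>c\<in>{c. c<n \<and> par c \<noteq> c \<and> par c = v}. M$$(c,v)^2 / f c)"
        using uv by (simp add: sum.distrib sum.inter_filter[symmetric] atLeast0LessThan conj_commute)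
      finally show ?thesis using e diag[OF uv(2)] True by simp
    next
      case False
      have "(\<Sum>w\<in>{0..<n}. U$$(w,u) * (f w * U$$(w,v))) =
            (\<Sum>w\<in>{0..<n}. (if w = u then (if par u \<noteq> u \<and> v = par u then M$$(u,v) else 0) else 0)
               + (if w = v then (if par v \<noteq> v \<and> u = par v then M$$(v,u) else 0) else 0))"
      proof (rule sum.cong)
        fix w assume w: "w \<in> {0..<n}"
        show "U$$(w,u) * (f w * U$$(w,v)) = (if w = u then (if par u \<noteq> u \<and> v = par u then M$$(u,v) else 0) else 0)
               + (if w = v then (if par v \<noteq> v \<and> u = par v then M$$(v,u) else 0) else 0)"
          proof -
          have wn: "w < n" using w by simp
          have e1: "U$$(w,u) = (if w = u then 1 else if par w \<noteq> w \<and> u = par w then M$$(w,u)/f w else 0)"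
            using Uij[OF wn uv(1)] by simp
          have e2: "U$$(w,v) = (if w = v then 1 else if par w \<noteq> w \<and> v = par w then M$$(w,v)/f w else 0)"
            using Uij[OF wn uv(2)] by simp
          show ?thesis
          proof (cases "w = u")
            case a: True
            show ?thesis
            proof (cases "par u \<noteq> u \<and> v = par u")
              case b: True
              have "f u \<noteq> 0" using fnz[OF uv(1)] b by simp
              thus ?thesis using a b e1 e2 False by simp
            next
              case b: False
              thus ?thesis using a e1 e2 False by auto
            qed
          next
            case a: False
            show ?thesis
            proof (cases "w = v")
              case c: True
              show ?thesis
              proof (cases "par v \<noteq> v \<and> u = par v")
                case b: True
                have "f v \<noteq> 0" using fnz[OF uv(2)] b by simp
                thus ?thesis using a b c e1 e2 False by simp
              next
                case b: False
                thus ?thesis using a c e1 e2 False by auto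
              qed
            next
              case c: False
              have "U$$(w,u) = 0 \<or> U$$(w,v) = 0" using a c e1 e2 False by auto
              thus ?thesis using a c by auto
            qed
          qed
        qed
      qed simp
      also have "\<dots> = (if par u \<noteq> u \<and> v = par u then M$$(u,v) else 0) + (if par v \<noteq> v \<and> u = par v then M$$(v,u) else 0)"
        using uv by (simp add: sum.distrib)
      also have "\<dots> = M$$(u,v)"
      proof -
        have "\<not> (par u \<noteq> u \<and> v = par u \<and> par v \<noteq> v \<and> u = par v)"
          using par[OF uv(1)] par[OF uv(2)] by auto
        hence "(par u \<noteq> u \<and> v = par u \<and> \<not>(par v \<noteq> v \<and> u = par v)) \<or> (\<not>(par u \<noteq> u \<and> v = par u) \<and> par v \<noteq> v \<and> u = par v) \<or> (\<not>(par u \<noteq> u \<and> v = par u) \<and> \<not>(par v \<noteq> v \<and> u = par v))"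
          by blast
        thus ?thesis
        proof (elim disjE)
          assume a: "par u \<noteq> u \<and> v = par u \<and> \<not>(par v \<noteq> v \<and> u = par v)"
          have e1: "(if par u \<noteq> u \<and> v = par u then M$$(u,v) else 0) = M$$(u,v)" using a by (intro if_P) blast
          have e2: "(if par v \<noteq> v \<and> u = par v then M$$(v,u) else 0) = 0" using a by (intro if_not_P) blast
          show ?thesis unfolding e1 e2 by simp
        next
          assume a: "\<not>(par u \<noteq> u \<and> v = par u) \<and> par v \<noteq> v \<and> u = par v"
          have "M$$(v,u) = M$$(u,v)" using sym[OF uv] by simp
          moreover have e1: "(if par u \<noteq> u \<and> v = par u then M$$(u,v) else 0) = 0" using a by (intro if_not_P) blast
          moreover have e2: "(if par v \<noteq> v \<and> u = par v then M$$(v,u) else 0) = M$$(v,u)" using a by (intro if_P) blast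
          ultimately show ?thesis by simp
        next
          assume a: "\<not>(par u \<noteq> u \<and> v = par u) \<and> \<not>(par v \<noteq> v \<and> u = par v)"
          have "M$$(u,v) = 0" using zero[OF uv False] a False by metis
          moreover have e1: "(if par u \<noteq> u \<and> v = par u then M$$(u,v) else 0) = 0" using a by (intro if_not_P) blast
          moreover have e2: "(if par v \<noteq> v \<and> u = par v then M$$(v,u) else 0) = 0" using a by (intro if_not_P) blast
          ultimately show ?thesis by simp
        qed
      qed
      finally show ?thesis using e by simp
    qed
  qed (use U D M in auto)
  have dU: "det U = (\<Prod>i<n. U $$ (i,i))"
    proof (rule det_hgen[OF U, of h])
    fix i j assume "i<n" "j<n" "i \<noteq> j" "U$$(i,j) \<noteq> 0"
    thus "h i < h j" using par[of i] by (simp add: Uij split: if_splits)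
  qed
  have dD: "det D = (\<Prod>i<n. D $$ (i,i))"
    by (rule det_hgen[OF D, of "\<lambda>_. 0"]) (simp add: Dij)
  have "det M = det (transpose_mat U) * (det D * det U)"
    using MU det_mult[of "transpose_mat U" n "D * U"] det_mult[OF D U] U D by simp
  also have "\<dots> = (\<Prod>v<n. f v)"
    using det_transpose[OF U] dU dD by (simp add: Uij Dij)
  finally show ?thesis .
qed




lemma walk_single: "is_walk E [v]" unfolding is_walk_def by simp

lemma walk_append:
  assumes "is_walk E xs" "is_walk E ys" "E (last xs) (hd ys)"
  shows "is_walk E (xs @ ys)"
  unfolding is_walk_def
proof (intro conjI allI impI)
  show "xs @ ys \<noteq> []" using assms(1) unfolding is_walk_def by simp
  fix i assume i: "Suc i < length (xs @ ys)"
  have xs: "xs \<noteq> []" "\<And>i. Suc i < length xs \<Longrightarrow> E (xs!i) (xs!Suc i)" using assms(1) unfolding is_walk_def by auto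
  have ys: "ys \<noteq> []" "\<And>i. Suc i < length ys \<Longrightarrow> E (ys!i) (ys!Suc i)" using assms(2) unfolding is_walk_def by auto
  consider "Suc i < length xs" | "Suc i = length xs" | "Suc i > length xs" by linarith
  then show "E ((xs @ ys) ! i) ((xs @ ys) ! Suc i)"
  proof cases
    case 1 thus ?thesis using xs by (simp add: nth_append)
  next
    case 2
    have ieq: "i = length xs - 1" using 2 by simp
    have "(xs @ ys) ! i = last xs" using 2 xs(1) unfolding ieq by (simp add: nth_append last_conv_nth)
    moreover have "(xs @ ys) ! Suc i = hd ys" using 2 ys(1) by (simp add: nth_append hd_conv_nth)
    ultimately show ?thesis using assms(3) by simp
  next
    case 3
    have "Suc (i - length xs) < length ys" using 3 i by simp
    hence "E (ys ! (i - length xs)) (ys ! Suc (i - length xs))" using ys by blast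
    moreover have "Suc i - length xs = Suc (i - length xs)" using 3 by simp
    ultimately show ?thesis using 3 by (simp add: nth_append)
  qed
qed

lemma walk_take: "is_walk E xs \<Longrightarrow> 0 < m \<Longrightarrow> is_walk E (take m xs)"
  unfolding is_walk_def by auto

lemma walk_rev:
  assumes "is_walk E xs" "\<And>a b. E a b \<Longrightarrow> E b a"
  shows "is_walk E (rev xs)"
  unfolding is_walk_def
proof (intro conjI allI impI)
  show "rev xs \<noteq> []" using assms(1) unfolding is_walk_def by simp
  fix i assume i: "Suc i < length (rev xs)"
  let ?l = "length xs"
  have "E (xs ! (?l - Suc (Suc i))) (xs ! Suc (?l - Suc (Suc i)))"
    using assms(1) i unfolding is_walk_def by auto
  moreover have "Suc (?l - Suc (Suc i)) = ?l - Suc i" using i by simp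
  ultimately have "E (xs ! (?l - Suc (Suc i))) (xs ! (?l - Suc i))" by simp
  thus "E (rev xs ! i) (rev xs ! Suc i)" using i assms(2) by (simp add: rev_nth)
qed

locale rtree =
  fixes N :: nat and E :: "nat \<Rightarrow> nat \<Rightarrow> bool" and r :: nat
  assumes tree: "is_tree N E" and rN: "r < N"
begin

abbreviation g where "g v \<equiv> gdist E r v"

lemma sg: "E u v \<Longrightarrow> u < N \<and> v < N \<and> u \<noteq> v \<and> E v u"
  using tree unfolding is_tree_def simple_graph_def by blast

lemma Esym: "E u v \<Longrightarrow> E v u" using sg by blast

lemma nocyc: "\<not> has_cycle E" using tree unfolding is_tree_def by blast

lemma g_ex: assumes "v < N"
  shows "\<exists>xs. is_walk E xs \<and> hd xs = r \<and> last xs = v \<and> length xs = Suc (g v)"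
proof -
  obtain xs where xs: "is_walk E xs" "hd xs = r" "last xs = v"
    using tree assms rN unfolding is_tree_def connected_graph_def by blast
  hence "\<exists>m. \<exists>xs. is_walk E xs \<and> hd xs = r \<and> last xs = v \<and> length xs = Suc m"
    by (intro exI[of _ "length xs - 1"] exI[of _ xs]) (auto simp: is_walk_def)
  from LeastI_ex[OF this] show ?thesis unfolding gdist_def by blast
qed

lemma g_le: assumes "is_walk E xs" "hd xs = r" "last xs = v"
  shows "g v \<le> length xs - 1"
  unfolding gdist_def
  by (rule Least_le) (use assms in \<open>auto simp: is_walk_def intro!: exI[of _ xs]\<close>)

lemma g_r: "g r = 0"
  using g_le[OF walk_single, of r r] by simp

lemma g0: assumes "v < N" "g v = 0" shows "v = r"
proof -
  obtain xs where xs: "is_walk E xs" "hd xs = r" "last xs = v" "length xs = Suc (g v)"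
    using g_ex[OF assms(1)] by blast
  hence "length xs = 1" using assms by simp
  then obtain a where "xs = [a]" by (cases xs) auto
  thus ?thesis using xs by simp
qed

lemma g_edge: assumes "E u v" shows "g v \<le> g u + 1"
proof -
  have u: "u < N" using sg[OF assms] by blast
  obtain xs where xs: "is_walk E xs" "hd xs = r" "last xs = u" "length xs = Suc (g u)"
    using g_ex[OF u] by blast
  have "is_walk E (xs @ [v])" using walk_append[OF xs(1) walk_single] xs assms by simp
  moreover have "hd (xs @ [v]) = r" using xs by (cases xs) auto
  ultimately have "g v \<le> length (xs @ [v]) - 1" using g_le[of "xs @ [v]" v] by simp
  thus ?thesis using xs by simp
qed

lemma g_par_ex: assumes "v < N" "v \<noteq> r" shows "\<exists>p. E v p \<and> g p + 1 = g v"
proof -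
  obtain xs where xs: "is_walk E xs" "hd xs = r" "last xs = v" "length xs = Suc (g v)"
    using g_ex[OF assms(1)] by blast
  have gv: "g v \<ge> 1" using g0 assms by fastforce
  define m where "m = g v"
  define p where "p = xs ! (m - 1)"
  have "\<forall>i. Suc i < length xs \<longrightarrow> E (xs ! i) (xs ! Suc i)" using xs(1) unfolding is_walk_def by simp
  moreover have "Suc (m-1) < length xs" using xs(4) gv unfolding m_def by simp
  ultimately have "E (xs ! (m-1)) (xs ! Suc (m-1))" by blast
  moreover have "xs ! Suc (m-1) = v"
  proof -
    have "xs \<noteq> []" using xs(4) by auto
    hence "last xs = xs ! (length xs - 1)" by (rule last_conv_nth)
    moreover have "length xs - 1 = Suc (m - 1)" using xs(4) gv unfolding m_def by simp
    ultimately show ?thesis using xs(3) by metis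
  qed
  ultimately have Epv: "E p v" unfolding p_def by simp
  have lx: "length xs \<ge> 2" using xs(4) gv by simp
  have "is_walk E (butlast xs)" unfolding is_walk_def
  proof (intro conjI allI impI)
    show "butlast xs \<noteq> []" using lx by (cases xs) auto
    fix i assume "Suc i < length (butlast xs)"
    thus "E (butlast xs ! i) (butlast xs ! Suc i)" using xs(1) unfolding is_walk_def by (simp add: nth_butlast)
  qed
  moreover have "hd (butlast xs) = r" using lx xs(2) by (cases xs) auto
  moreover have "last (butlast xs) = p"
  proof -
    have ne: "butlast xs \<noteq> []" using lx by (cases xs) auto
    have "last (butlast xs) = butlast xs ! (length (butlast xs) - 1)" by (rule last_conv_nth[OF ne])
    also have "\<dots> = xs ! (length (butlast xs) - 1)" using lx by (subst nth_butlast) auto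
    also have "length (butlast xs) - 1 = m - 1" using xs(4) unfolding m_def by simp
    finally show ?thesis unfolding p_def .
  qed
  ultimately have "g p \<le> length (butlast xs) - 1" using g_le by blast
  hence "g p \<le> m - 1" using xs unfolding m_def by simp
  moreover have "g v \<le> g p + 1" using g_edge[OF Epv] .
  ultimately have "g p + 1 = g v" using gv unfolding m_def by linarith
  thus ?thesis using Esym[OF Epv] by blast
qed

definition par :: "nat \<Rightarrow> nat" where
  "par v = (if v < N \<and> v \<noteq> r then (SOME p. E v p \<and> g p + 1 = g v) else v)"

lemma par: assumes "v < N" "v \<noteq> r"
  shows "E v (par v)" "g (par v) + 1 = g v" "par v < N" "par v \<noteq> v"
proof -
  have "E v (par v) \<and> g (par v) + 1 = g v"
    unfolding par_def using assms someI_ex[OF g_par_ex[OF assms]] by simp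
  thus "E v (par v)" "g (par v) + 1 = g v" by auto
  thus "par v < N" "par v \<noteq> v" using sg by blast+
qed

lemma par_r: "par r = r" unfolding par_def by simp
lemma par_out: "v \<ge> N \<Longrightarrow> par v = v" unfolding par_def by simp

lemma iter: assumes "v < N" "i \<le> g v"
  shows "g ((par ^^ i) v) = g v - i \<and> (par ^^ i) v < N"
  using assms(2)
proof (induction i)
  case 0 thus ?case using assms by simp
next
  case (Suc i)
  hence IH: "g ((par ^^ i) v) = g v - i" "(par ^^ i) v < N" by auto
  have "(par ^^ i) v \<noteq> r" using IH Suc.prems g_r by auto
  thus ?case using par[OF IH(2)] IH Suc.prems by auto
qed

lemma iter_E: assumes "v < N" "i < g v"
  shows "E ((par ^^ i) v) ((par ^^ Suc i) v)"
proof -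
  have "g ((par ^^ i) v) = g v - i" "(par ^^ i) v < N" using iter[OF assms(1)] assms(2) by auto
  moreover hence "(par ^^ i) v \<noteq> r" using assms g_r by auto
  ultimately show ?thesis using par by simp
qed

lemma iter_r: assumes "v < N" shows "(par ^^ (g v)) v = r"
  using iter[OF assms, of "g v"] g0 by simp

definition path :: "nat \<Rightarrow> nat list" where
  "path v = map (\<lambda>i. (par ^^ i) v) [0..<Suc (g v)]"

lemma path_len: "length (path v) = Suc (g v)" unfolding path_def by simp
lemma path_nth: "i < Suc (g v) \<Longrightarrow> path v ! i = (par ^^ i) v"
  unfolding path_def by (simp del: upt_Suc)

lemma path_walk: assumes "v < N" shows "is_walk E (path v)"
  unfolding is_walk_def path_len
proof (intro conjI allI impI)
  show "path v \<noteq> []" using path_len[of v] by auto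
  fix i assume "Suc i < Suc (g v)"
  thus "E (path v ! i) (path v ! Suc i)" using iter_E[OF assms, of i] path_nth by simp
qed

lemma path_distinct: assumes "v < N" shows "distinct (path v)"
  unfolding distinct_conv_nth path_len
proof (intro allI impI)
  fix i j assume "i < Suc (g v)" "j < Suc (g v)" "i \<noteq> j"
  thus "path v ! i \<noteq> path v ! j" using iter[OF assms, of i] iter[OF assms, of j] path_nth by force
qed

lemma path_hd: "path v ! 0 = v" using path_nth[of 0 v] by simp
lemma path_last: "v < N \<Longrightarrow> path v ! (g v) = r" using path_nth[of "g v" v] iter_r by simp

lemma near: assumes "E u v" "u \<noteq> par v" "v \<noteq> par u" "j \<le> g v" "u = (par ^^ j) v"
  shows False
proof -
  have v: "v < N" using sg assms(1) by blast
  have "g u = g v - j" using iter[OF v assms(4)] assms(5) by simp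
  moreover have "g v \<le> g u + 1" using g_edge[OF assms(1)] .
  ultimately have "j \<le> 1" using assms(4) by linarith
  moreover have "j \<noteq> 0"
  proof
    assume "j = 0" hence "u = v" using assms(5) by simp
    thus False using sg[OF assms(1)] by simp
  qed
  moreover have "j \<noteq> 1" using assms(2,5) by force
  ultimately show False by linarith
qed

lemma edge_par: assumes "E u v" shows "u = par v \<or> v = par u"
proof (rule ccontr)
  assume nb: "\<not> (u = par v \<or> v = par u)"
  have uN: "u < N" and vN: "v < N" using sg[OF assms] by auto
  define A where "A = path u"
  define B where "B = path v"
  have PA: "\<exists>i. A ! i \<in> set B"
    using path_last[OF uN] path_last[OF vN] path_len[of v]
    by (intro exI[of _ "g u"]) (auto simp: A_def B_def in_set_conv_nth intro!: exI[of _ "g v"])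
  define i0 where "i0 = (LEAST i. A ! i \<in> set B)"
  have i0B: "A ! i0 \<in> set B" using LeastI_ex[OF PA] unfolding i0_def .
  have i0le: "i0 \<le> g u" unfolding i0_def
    using path_last[OF uN] path_last[OF vN] path_len[of v]
    by (intro Least_le) (auto simp: A_def B_def in_set_conv_nth intro!: exI[of _ "g v"])
  have i0min: "A ! i \<notin> set B" if "i < i0" for i using not_less_Least[OF that[unfolded i0_def]] i0_def by simp
  obtain j0 where j0: "j0 < length B" "B ! j0 = A ! i0" using i0B by (auto simp: in_set_conv_nth)
  have j0le: "j0 \<le> g v" using j0 path_len[of v] B_def by simp
  have Ai: "A ! i0 = (par ^^ i0) u" using path_nth[of i0 u] i0le A_def by simp
  have Bj: "B ! j0 = (par ^^ j0) v" using path_nth[of j0 v] j0le B_def by simp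
  have i0pos: "i0 \<noteq> 0"
  proof
    assume "i0 = 0"
    hence "u = (par ^^ j0) v" using j0 Ai Bj by simp
    thus False using near[OF assms _ _ j0le] nb by blast
  qed
  have j0pos: "j0 \<noteq> 0"
  proof
    assume "j0 = 0"
    hence "v = (par ^^ i0) u" using j0 Ai Bj by simp
    thus False using near[OF Esym[OF assms] _ _ i0le] nb by blast
  qed
  define C where "C = take (Suc i0) A @ rev (take j0 B)"
  have wA: "is_walk E (take (Suc i0) A)" using walk_take[OF path_walk[OF uN]] A_def by simp
  have wB: "is_walk E (rev (take j0 B))" using walk_rev[OF walk_take[OF path_walk[OF vN]]] Esym j0pos B_def by simp
  have lastA: "last (take (Suc i0) A) = A ! i0" using i0le path_len[of u] A_def
    by (subst last_conv_nth) (auto simp: min_def)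
  have hdB: "hd (rev (take j0 B)) = B ! (j0 - 1)"
  proof -
    have ne: "take j0 B \<noteq> []" using j0pos j0 by (cases B) auto
    have "hd (rev (take j0 B)) = last (take j0 B)" by (simp add: hd_rev)
    also have "\<dots> = take j0 B ! (length (take j0 B) - 1)" by (rule last_conv_nth[OF ne])
    also have "\<dots> = B ! (j0 - 1)" using j0 j0pos by simp
    finally show ?thesis .
  qed
  have "\<forall>i. Suc i < length B \<longrightarrow> E (B ! i) (B ! Suc i)" using path_walk[OF vN] unfolding is_walk_def B_def by simp
  moreover have "Suc (j0 - 1) < length B" using j0 j0pos by simp
  ultimately have "E (B ! (j0 - 1)) (B ! Suc (j0 - 1))" by blast
  hence "E (B ! (j0 - 1)) (B ! j0)" using j0pos by simp
  hence junc: "E (last (take (Suc i0) A)) (hd (rev (take j0 B)))" using lastA hdB j0 Esym by simp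
  have wC: "is_walk E C" unfolding C_def using walk_append[OF wA wB junc] .
  have lenC: "length C \<ge> 3" unfolding C_def using i0le path_len[of u] j0 i0pos j0pos A_def by simp
  have dA: "distinct A" "distinct B" using path_distinct uN vN A_def B_def by auto
  have disj: "set (take (Suc i0) A) \<inter> set (take j0 B) = {}"
  proof (rule ccontr)
    assume "set (take (Suc i0) A) \<inter> set (take j0 B) \<noteq> {}"
    then obtain x where x1: "x \<in> set (take (Suc i0) A)" and x2: "x \<in> set (take j0 B)" by blast
    obtain i where i: "i < Suc i0" "i < length A" "x = A ! i" using x1 by (auto simp: in_set_conv_nth)
    obtain j where j: "j < j0" "x = B ! j" using x2 j0 by (auto simp: in_set_conv_nth)
    have "x \<in> set B" using j j0 by auto
    hence "\<not> i < i0" using i0min i by blast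
    hence "i = i0" using i by simp
    hence "B ! j = B ! j0" using i j j0 by simp
    hence "j = j0" using dA(2) j j0 nth_eq_iff_index_eq[of B j j0] by simp
    thus False using j by simp
  qed
  have dC: "distinct C" unfolding C_def using dA disj by simp
  have hdC: "hd C = u" unfolding C_def A_def using path_hd[of u] path_len[of u]
    by (cases "path u") auto
  have lastC: "last C = v"
  proof -
    have ne: "take j0 B \<noteq> []" using j0pos j0 by (cases B) auto
    have "last C = last (rev (take j0 B))" unfolding C_def using ne by simp
    also have "\<dots> = hd (take j0 B)" by (simp add: last_rev)
    also have "\<dots> = B ! 0" using ne by (cases B) auto
    finally show ?thesis using path_hd[of v] B_def by simp
  qed
  have "has_cycle E" unfolding has_cycle_def using wC lenC dC hdC lastC Esym[OF assms] by blast
  thus False using nocyc by simp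
qed

end



lemma char_poly_eval:
  fixes A :: "real mat"
  assumes A: "A \<in> carrier_mat n n"
  shows "poly (char_poly A) x = det (mat n n (\<lambda>(i,j). (if i = j then x else 0) - A$$(i,j)))"
  unfolding char_poly_def
  by (rule poly_det_cong[of _ n]) (use A in \<open>auto simp: char_poly_matrix_def\<close>)

definition cc :: "(nat \<Rightarrow> nat) \<Rightarrow> nat \<Rightarrow> nat \<Rightarrow> real" where
  "cc d k s = (if s = k then real (d k) else real (d s) - 1)"

fun Fr :: "real \<Rightarrow> (nat \<Rightarrow> nat) \<Rightarrow> nat \<Rightarrow> real \<Rightarrow> nat \<Rightarrow> real" where
  "Fr \<alpha> d k x 0 = 1"
| "Fr \<alpha> d k x (Suc s) = (if s = 0 then x - \<alpha>
     else x - \<alpha> * real (d (Suc s)) - (1 - \<alpha>)^2 * cc d k (Suc s) / Fr \<alpha> d k x s)"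

lemma T_entry_sq:
  assumes "2 \<le> s" "s \<le> k" "s < k \<Longrightarrow> d s \<ge> 1"
  shows "((1 - \<alpha>) * sqrt (real (d k)))^2 = (1-\<alpha>)^2 * real (d k)"
    and "s < k \<Longrightarrow> ((1 - \<alpha>) * sqrt (real (d s) - 1))^2 = (1-\<alpha>)^2 * (real (d s) - 1)"
  using assms by (auto simp: power_mult_distrib)

lemma T_char:
  fixes \<alpha> :: real
  assumes mk: "m \<le> k"
    and dpos: "\<And>s. 2 \<le> s \<Longrightarrow> s < k \<Longrightarrow> d s \<ge> 1"
    and Fnz: "\<And>i. 1 \<le> i \<Longrightarrow> i < m \<Longrightarrow> Fr \<alpha> d k x i \<noteq> 0"
  shows "poly (char_poly (T_mat \<alpha> d k m)) x = (\<Prod>i\<in>{1..m}. Fr \<alpha> d k x i)"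
proof -
  define T where "T = T_mat \<alpha> d k m"
  have T: "T \<in> carrier_mat m m" unfolding T_def T_mat_def by simp
  define M where "M = mat m m (\<lambda>(i,j). (if i = j then x else 0) - T$$(i,j))"
  have Mc: "M \<in> carrier_mat m m" unfolding M_def by simp
  define par where "par a = (if a + 1 < m then a + 1 else a)" for a :: nat
  have Tij: "T$$(a,b) = (if a = b then (if a = 0 then \<alpha> else \<alpha> * real (d (a + 1)))
     else if b = a + 1 \<or> a = b + 1 then
       (let s = max a b + 1 in
        if s = k then (1 - \<alpha>) * sqrt (real (d k))
        else (1 - \<alpha>) * sqrt (real (d s) - 1))
     else 0)" if "a < m" "b < m" for a b
    using that unfolding T_def T_mat_def by simp
  have Mij: "M$$(a,b) = (if a = b then x else 0) - T$$(a,b)" if "a < m" "b < m" for a b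
    using that unfolding M_def by simp
  have "det M = (\<Prod>a<m. Fr \<alpha> d k x (a+1))"
  proof (rule ldl_det[OF Mc, of par "\<lambda>a. a"])
    fix i j assume ij: "i < m" "j < m"
    show "M$$(i,j) = M$$(j,i)"
    proof (cases "i = j")
      case False thus ?thesis using ij by (simp add: Mij Tij max.commute Let_def)
    qed simp
  next
    fix i assume "i < m" "par i \<noteq> i" thus "par i < m \<and> i < par i" unfolding par_def by (auto split: if_splits)
  next
    fix i j assume ij: "i < m" "j < m" "i \<noteq> j" "j \<noteq> par i" "i \<noteq> par j"
    hence "\<not> (j = i + 1 \<or> i = j + 1)" unfolding par_def by auto
    thus "M$$(i,j) = 0" using ij by (simp add: Mij Tij)
  next
    fix i assume "i < m" "par i \<noteq> i" thus "Fr \<alpha> d k x (i+1) \<noteq> 0" unfolding par_def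
      using Fnz[of "i+1"] by (auto split: if_splits)
  next
    fix v assume v: "v < m"
    show "M$$(v,v) = Fr \<alpha> d k x (v+1) + (\<Sum>c\<in>{c. c<m \<and> par c \<noteq> c \<and> par c = v}. M$$(c,v)^2 / Fr \<alpha> d k x (c+1))"
    proof (cases v)
      case 0
      have e: "{c. c<m \<and> par c \<noteq> c \<and> par c = v} = {}" unfolding par_def using 0 by auto
      show ?thesis unfolding e using 0 v by (simp add: Mij Tij)
    next
      case (Suc a)
      have cs: "{c. c<m \<and> par c \<noteq> c \<and> par c = v} = {a}" unfolding par_def using Suc v by auto
      have Mav: "M$$(a,v) = - (if v + 1 = k then (1 - \<alpha>) * sqrt (real (d k))
        else (1 - \<alpha>) * sqrt (real (d (v+1)) - 1))"
        using Suc v by (simp add: Mij Tij Let_def)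
      have sq: "(M$$(a,v))^2 = (1-\<alpha>)^2 * cc d k (v+1)"
      proof (cases "v + 1 = k")
        case True thus ?thesis using Mav by (simp add: cc_def power_mult_distrib)
      next
        case False
        hence "d (v+1) \<ge> 1" using dpos[of "v+1"] Suc v mk by simp
        thus ?thesis using Mav False by (simp add: cc_def power_mult_distrib)
      qed
      have "Fr \<alpha> d k x (v+1) = x - \<alpha> * real (d (v+1)) - (1 - \<alpha>)^2 * cc d k (v+1) / Fr \<alpha> d k x v"
        using Suc by simp
      thus ?thesis using cs sq Suc v by (simp add: Mij Tij)
    qed
  qed
  also have "\<dots> = (\<Prod>i\<in>{1..m}. Fr \<alpha> d k x i)"
    by (rule prod.reindex_bij_witness[of _ "\<lambda>i. i - 1" "\<lambda>a. a + 1"]) auto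
  finally show ?thesis using char_poly_eval[OF T] unfolding M_def T_def by simp
qed




context rtree begin

definition children :: "nat \<Rightarrow> nat set" where
  "children v = {c. c < N \<and> c \<noteq> r \<and> par c = v}"

lemma children_fin: "finite (children v)" unfolding children_def by simp

lemma child_g: "c \<in> children v \<Longrightarrow> g c = g v + 1"
  unfolding children_def using par by force

lemma par_ne: "v < N \<Longrightarrow> par v \<noteq> v \<longleftrightarrow> v \<noteq> r"
  using par par_r by blast

lemma deg_children: assumes v: "v < N"
  shows "degree N E v = card (children v) + (if v = r then 0 else 1)"
proof -
  have nb: "{u. u < N \<and> E v u} = children v \<union> (if v = r then {} else {par v})"
  proof (intro equalityI subsetI)
    fix u assume "u \<in> {u. u < N \<and> E v u}"
    hence u: "u < N" "E v u" by auto
    consider "v = par u" | "u = par v" using edge_par[OF u(2)] by blast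
    thus "u \<in> children v \<union> (if v = r then {} else {par v})"
    proof cases
      case 1
      have "u \<noteq> r" using 1 par_r sg[OF u(2)] by auto
      thus ?thesis using 1 u unfolding children_def by auto
    next
      case 2
      have "v \<noteq> r" using 2 par_r sg[OF u(2)] by auto
      thus ?thesis using 2 by auto
    qed
  next
    fix u assume "u \<in> children v \<union> (if v = r then {} else {par v})"
    thus "u \<in> {u. u < N \<and> E v u}"
    proof
      assume "u \<in> children v"
      hence u: "u < N" "u \<noteq> r" "par u = v" unfolding children_def by auto
      have "E u (par u)" using par(1)[OF u(1,2)] .
      hence "E v u" using Esym u(3) by simp
      thus ?thesis using u by simp
    next
      assume "u \<in> (if v = r then {} else {par v})"
      hence "v \<noteq> r" "u = par v" by (auto split: if_splits)
      thus ?thesis using par[OF v] by auto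
    qed
  qed
  have "par v \<notin> children v" if "v \<noteq> r"
  proof
    assume "par v \<in> children v"
    hence "g (par v) = g v + 1" using child_g by blast
    thus False using par[OF v that] by simp
  qed
  hence "card (children v \<union> (if v = r then {} else {par v})) = card (children v) + (if v = r then 0 else 1)"
    using children_fin by (auto simp: card_insert_if)
  thus ?thesis unfolding degree_def nb by simp
qed

end

locale bethe = rtree +
  fixes k :: nat and n d :: "nat \<Rightarrow> nat" and \<alpha> :: real
  assumes kdef: "k = Max (level E r ` {..<N})" and k2: "k \<ge> 2"
    and samedeg: "\<And>u v. u<N \<Longrightarrow> v<N \<Longrightarrow> level E r u = level E r v \<Longrightarrow> degree N E u = degree N E v"
    and n_def: "\<And>j. j\<in>{1..k} \<Longrightarrow> n j = card {v. v < N \<and> level E r v = k - j + 1}"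
    and d_def: "\<And>j v. j\<in>{1..k} \<Longrightarrow> v<N \<Longrightarrow> level E r v = k - j + 1 \<Longrightarrow> degree N E v = d j"
    and alpha: "0 \<le> \<alpha>" "\<alpha> < 1"
begin

lemma lev: "level E r v = g v + 1" unfolding level_def by simp

lemma B1: "v < N \<Longrightarrow> g v + 1 \<le> k"
proof -
  assume v: "v < N"
  have "level E r v \<le> Max (level E r ` {..<N})" by (rule Max_ge) (use v in auto)
  thus ?thesis unfolding kdef lev .
qed

lemma B2: "\<exists>w<N. g w + 1 = k"
proof -
  have "k \<in> level E r ` {..<N}" unfolding kdef using rN by (intro Max_in) auto
  thus ?thesis using lev by auto
qed

lemma B3: assumes "l < k" shows "\<exists>v<N. g v = l"
proof -
  obtain w where w: "w < N" "g w + 1 = k" using B2 by blast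
  have "k - 1 - l \<le> g w" using w by simp
  hence "g ((par ^^ (k - 1 - l)) w) = g w - (k - 1 - l) \<and> (par ^^ (k - 1 - l)) w < N"
    using iter[OF w(1)] by blast
  moreover have "g w - (k - 1 - l) = l" using w assms by simp
  ultimately show ?thesis by (intro exI[of _ "(par ^^ (k - 1 - l)) w"]) simp
qed

lemma B4: assumes v: "v < N" and lt: "g v + 1 < k" shows "children v \<noteq> {}"
proof -
  obtain w where w: "w < N" "g w + 1 = k" using B2 by blast
  define c where "c = (par ^^ (k - 2 - g v)) w"
  have "k - 2 - g v \<le> g w" using w by simp
  hence "g c = g w - (k - 2 - g v) \<and> c < N" using iter[OF w(1)] unfolding c_def by blast
  hence c: "g c = g v + 1" "c < N" using w lt by auto
  have cr: "c \<noteq> r" using c g_r by auto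
  define u where "u = par c"
  have u: "u < N" "g u = g v" using par[OF c(2) cr] c unfolding u_def by auto
  have cu: "c \<in> children u" unfolding children_def u_def using c cr by simp
  have du: "degree N E u = degree N E v" using samedeg[OF u(1) v] u lev by simp
  show ?thesis
  proof (cases "v = r")
    case True
    hence "g u = 0" using u g_r by simp
    hence "u = r" using g0 u by simp
    thus ?thesis using True cu by auto
  next
    case False
    have "g v \<noteq> 0" using g0 v False by blast
    hence ur: "u \<noteq> r" using u g_r by auto
    have "card (children v) = card (children u)" using deg_children[OF u(1)] deg_children[OF v] du ur False by simp
    moreover have "card (children u) \<noteq> 0" using cu children_fin by auto
    ultimately show ?thesis by auto
  qed
qed

lemma B5: assumes v: "v < N" and eq: "g v + 1 = k"
  shows "children v = {}" "degree N E v = 1"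
proof -
  show "children v = {}"
  proof (rule ccontr)
    assume "children v \<noteq> {}"
    then obtain c where "c \<in> children v" by blast
    hence "g c = g v + 1" "c < N" using child_g unfolding children_def by auto
    thus False using B1[of c] eq by simp
  qed
  moreover have "v \<noteq> r" using eq g_r k2 by auto
  ultimately show "degree N E v = 1" using deg_children[OF v] by simp
qed

lemma n_eq: assumes "j \<in> {1..k}" shows "n j = card {v. v < N \<and> g v = k - j}"
proof -
  have "{v. v < N \<and> level E r v = k - j + 1} = {v. v < N \<and> g v = k - j}"
    using assms lev by auto
  thus ?thesis using n_def[OF assms] by simp
qed

lemma B6: assumes "1 \<le> j" "j < k" shows "n (j+1) \<le> n j"
proof -
  define S1 where "S1 = {v. v < N \<and> g v = k - (j+1)}"
  define S2 where "S2 = {v. v < N \<and> g v = k - j}"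
  have "S1 \<subseteq> par ` S2"
  proof
    fix v assume "v \<in> S1"
    hence v: "v < N" "g v = k - (j+1)" unfolding S1_def by auto
    hence "g v + 1 < k" using assms by simp
    then obtain c where c: "c \<in> children v" using B4[OF v(1)] by blast
    hence "par c = v" "c \<in> S2" using child_g[OF c] v assms unfolding children_def S2_def by auto
    thus "v \<in> par ` S2" by force
  qed
  hence "card S1 \<le> card (par ` S2)" by (intro card_mono) (auto simp: S2_def)
  also have "\<dots> \<le> card S2" by (rule card_image_le) (simp add: S2_def)
  finally show ?thesis using n_eq[of j] n_eq[of "j+1"] assms unfolding S1_def S2_def by simp
qed

lemma B7: "n k = 1"
proof -
  have "{v. v < N \<and> g v = k - k} = {r}" using g0 g_r rN by auto
  thus ?thesis using n_eq[of k] k2 by simp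
qed

lemma B9: assumes "2 \<le> s" "s < k" shows "d s \<ge> 1"
proof -
  obtain v where v: "v < N" "g v = k - s" using B3[of "k - s"] assms by auto
  have "v \<noteq> r" using v assms g_r by auto
  hence "degree N E v \<ge> 1" using deg_children[OF v(1)] by simp
  moreover have "degree N E v = d s" using d_def[of s v] v assms lev by simp
  ultimately show ?thesis by simp
qed

lemma B8: assumes v: "v < N" and lt: "g v + 1 < k"
  shows "real (card (children v)) = cc d k (k - g v)" "degree N E v = d (k - g v)"
proof -
  show dg: "degree N E v = d (k - g v)" using d_def[of "k - g v" v] v lt lev B1[OF v] by simp
  show "real (card (children v)) = cc d k (k - g v)"
  proof (cases "v = r")
    case True
    thus ?thesis using deg_children[OF v] dg g_r by (simp add: cc_def)
  next
    case False
    hence "g v \<noteq> 0" using g0 v by blast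
    hence "k - g v \<noteq> k" using lt by simp
    thus ?thesis using deg_children[OF v] dg False by (simp add: cc_def)
  qed
qed

end



context bethe begin

lemma A_char:
  assumes Fnz: "\<And>i. 1 \<le> i \<Longrightarrow> i < k \<Longrightarrow> Fr \<alpha> d k x i \<noteq> 0"
  shows "poly (char_poly (A_alpha \<alpha> N E)) x = (\<Prod>s\<in>{1..k}. Fr \<alpha> d k x s ^ n s)"
proof -
  define A where "A = A_alpha \<alpha> N E"
  have A: "A \<in> carrier_mat N N" unfolding A_def A_alpha_def deg_mat_def adj_mat_def by simp
  have Aij: "A$$(u,v) = \<alpha> * (if u = v then real (degree N E u) else 0) + (1-\<alpha>) * (if E u v then 1 else 0)"
    if "u < N" "v < N" for u v
    using that unfolding A_def A_alpha_def deg_mat_def adj_mat_def by simp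
  define M where "M = mat N N (\<lambda>(i,j). (if i = j then x else 0) - A$$(i,j))"
  have Mc: "M \<in> carrier_mat N N" unfolding M_def by simp
  have Mij: "M$$(u,v) = (if u = v then x else 0) - A$$(u,v)" if "u < N" "v < N" for u v
    using that unfolding M_def by simp
  define f where "f v = Fr \<alpha> d k x (k - g v)" for v
  have "det M = (\<Prod>v<N. f v)"
  proof (rule ldl_det[OF Mc, of par "\<lambda>v. k - g v"])
    fix i j assume ij: "i < N" "j < N"
    show "M$$(i,j) = M$$(j,i)" using ij Esym by (auto simp: Mij Aij)
  next
    fix i assume i: "i < N" "par i \<noteq> i"
    hence ir: "i \<noteq> r" using par_r by auto
    show "par i < N \<and> k - g i < k - g (par i)" using par[OF i(1) ir] B1[OF i(1)] by auto
  next
    fix i j assume ij: "i < N" "j < N" "i \<noteq> j" "j \<noteq> par i" "i \<noteq> par j"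
    hence "\<not> E i j" using edge_par by blast
    thus "M$$(i,j) = 0" using ij by (simp add: Mij Aij)
  next
    fix i assume i: "i < N" "par i \<noteq> i"
    hence ir: "i \<noteq> r" using par_r by auto
    hence "g i \<noteq> 0" using g0 i by blast
    thus "f i \<noteq> 0" unfolding f_def using Fnz[of "k - g i"] B1[OF i(1)] by simp
  next
    fix v assume v: "v < N"
    have cs: "{c. c<N \<and> par c \<noteq> c \<and> par c = v} = children v"
      unfolding children_def using par_ne by auto
    have Mcv: "M$$(c,v) = -(1-\<alpha>)" and fc: "f c = Fr \<alpha> d k x (k - g v - 1)" if c: "c \<in> children v" for c
    proof -
      have c': "c < N" "c \<noteq> r" "par c = v" using c unfolding children_def by auto
      have "E c v" using par(1)[OF c'(1,2)] c'(3) by simp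
      moreover have "c \<noteq> v" using sg calculation by blast
      ultimately show "M$$(c,v) = -(1-\<alpha>)" using c' v by (simp add: Mij Aij)
      show "f c = Fr \<alpha> d k x (k - g v - 1)" unfolding f_def using child_g[OF c] by simp
    qed
    have sum: "(\<Sum>c\<in>children v. M$$(c,v)^2 / f c) = real (card (children v)) * ((1-\<alpha>)^2 / Fr \<alpha> d k x (k - g v - 1))"
      using Mcv fc by (simp add: power2_commute)
    have nvv: "\<not> E v v" using sg by blast
    show "M$$(v,v) = f v + (\<Sum>c\<in>{c. c<N \<and> par c \<noteq> c \<and> par c = v}. M$$(c,v)^2 / f c)"
    proof (cases "g v + 1 = k")
      case True
      have "k - g v = Suc 0" using True by simp
      thus ?thesis unfolding cs f_def using B5[OF v True] v nvv by (simp add: Mij Aij)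
    next
      case False
      hence lt: "g v + 1 < k" using B1[OF v] by simp
      define s where "s = k - g v - 1"
      have ks: "k - g v = Suc s" "s \<noteq> 0" using lt unfolding s_def by auto
      have "f v = x - \<alpha> * real (d (Suc s)) - (1 - \<alpha>)^2 * cc d k (Suc s) / Fr \<alpha> d k x s"
        unfolding f_def ks(1) using ks(2) by simp
      moreover have "real (card (children v)) = cc d k (Suc s)" "degree N E v = d (Suc s)"
        using B8[OF v lt] ks by auto
      ultimately show ?thesis unfolding cs sum using v nvv ks(2) by (simp add: Mij Aij s_def)
    qed
  qed
  also have "\<dots> = (\<Prod>s\<in>{1..k}. (\<Prod>v\<in>{v\<in>{..<N}. k - g v = s}. f v))"
    by (rule prod.group[symmetric]) (auto dest: B1)
  also have "\<dots> = (\<Prod>s\<in>{1..k}. Fr \<alpha> d k x s ^ n s)"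
  proof (rule prod.cong[OF refl])
    fix s assume s: "s \<in> {1..k}"
    have e: "{v\<in>{..<N}. k - g v = s} = {v. v < N \<and> g v = k - s}" using s B1 by fastforce
    have "(\<Prod>v\<in>{v\<in>{..<N}. k - g v = s}. f v) = (\<Prod>v\<in>{v\<in>{..<N}. k - g v = s}. Fr \<alpha> d k x s)"
      by (rule prod.cong) (auto simp: f_def)
    also have "\<dots> = Fr \<alpha> d k x s ^ n s" using n_eq[OF s] e by simp
    finally show "(\<Prod>v\<in>{v\<in>{..<N}. k - g v = s}. f v) = Fr \<alpha> d k x s ^ n s" .
  qed
  finally show ?thesis using char_poly_eval[OF A] unfolding M_def A_def by simp
qed

end



lemma poly_eq_cofinite:
  fixes p q :: "real poly"
  assumes "finite Z" "\<And>x. x \<notin> Z \<Longrightarrow> poly p x = poly q x"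
  shows "p = q"
proof (rule ccontr)
  assume "p \<noteq> q"
  hence "p - q \<noteq> 0" by simp
  hence "finite {x. poly (p - q) x = 0}" by (rule poly_roots_finite)
  moreover have "UNIV \<subseteq> Z \<union> {x. poly (p - q) x = 0}" using assms(2) by auto
  ultimately have "finite (UNIV :: real set)" using assms(1) finite_subset by blast
  thus False using infinite_UNIV_char_0 by blast
qed

lemma pos_after:
  fixes p :: "real poly"
  assumes lc: "lead_coeff p > 0" and nz: "\<And>y. y \<ge> x \<Longrightarrow> poly p y \<noteq> 0"
  shows "poly p x > 0"
proof -
  obtain n0 where n0: "\<forall>y \<ge> n0. poly p y \<ge> lead_coeff p" using poly_pinfty_gt_lc[OF lc] by blast
  define y where "y = max x n0 + 1"
  have "y \<ge> n0" unfolding y_def by simp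
  hence "poly p y \<ge> lead_coeff p" using n0 by blast
  hence py: "poly p y > 0" using lc by linarith
  have xy: "x < y" unfolding y_def by simp
  show ?thesis
  proof (rule ccontr)
    assume "\<not> poly p x > 0"
    moreover have "poly p x \<noteq> 0" using nz by simp
    ultimately have "poly p x < 0" by simp
    then obtain z where "x < z" "z < y" "poly p z = 0" using poly_IVT_pos[OF xy _ py] by blast
    thus False using nz[of z] by simp
  qed
qed

lemma root_after:
  fixes p :: "real poly"
  assumes lc: "lead_coeff p > 0" and pm: "poly p m \<le> 0"
  shows "\<exists>y\<ge>m. poly p y = 0"
proof (rule ccontr)
  assume "\<not> (\<exists>y\<ge>m. poly p y = 0)"
  hence "poly p m > 0" using pos_after[OF lc, of m] by blast
  thus False using pm by simp
qed

lemma telescope: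
  fixes G :: "nat \<Rightarrow> real" and n :: "nat \<Rightarrow> nat"
  assumes mono: "\<And>j. 1 \<le> j \<Longrightarrow> j < K \<Longrightarrow> n (j+1) \<le> n j"
  shows "(\<Prod>j\<in>{1..<K}. (\<Prod>i\<in>{1..j}. G i) ^ (n j - n (j+1))) * (\<Prod>i\<in>{1..K}. G i) ^ n K
         = (\<Prod>i\<in>{1..K}. G i ^ n i)"
  using mono
proof (induction K)
  case 0 thus ?case by simp
next
  case (Suc K)
  show ?case
  proof (cases "K = 0")
    case True thus ?thesis by simp
  next
    case False
    have IH: "(\<Prod>j\<in>{1..<K}. (\<Prod>i\<in>{1..j}. G i) ^ (n j - n (j+1))) * (\<Prod>i\<in>{1..K}. G i) ^ n K
         = (\<Prod>i\<in>{1..K}. G i ^ n i)" using Suc by simp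
    have le: "n (K+1) \<le> n K" using Suc.prems[of K] False by simp
    have s1: "{1..<Suc K} = insert K {1..<K}" using False by auto
    have s2: "{1..Suc K} = insert (Suc K) {1..K}" by auto
    have "(\<Prod>j\<in>{1..<Suc K}. (\<Prod>i\<in>{1..j}. G i) ^ (n j - n (j+1))) * (\<Prod>i\<in>{1..Suc K}. G i) ^ n (Suc K)
      = (\<Prod>j\<in>{1..<K}. (\<Prod>i\<in>{1..j}. G i) ^ (n j - n (j+1))) * ((\<Prod>i\<in>{1..K}. G i) ^ (n K - n (K+1))
          * (\<Prod>i\<in>{1..K}. G i) ^ n (K+1)) * G (Suc K) ^ n (Suc K)"
      unfolding s1 s2 by (simp add: power_mult_distrib mult_ac)
    also have "(\<Prod>i\<in>{1..K}. G i) ^ (n K - n (K+1)) * (\<Prod>i\<in>{1..K}. G i) ^ n (K+1) = (\<Prod>i\<in>{1..K}. G i) ^ n K"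
      using le by (simp add: power_add[symmetric])
    also have "(\<Prod>j\<in>{1..<K}. (\<Prod>i\<in>{1..j}. G i) ^ (n j - n (j+1))) * (\<Prod>i\<in>{1..K}. G i) ^ n K * G (Suc K) ^ n (Suc K)
       = (\<Prod>i\<in>{1..Suc K}. G i ^ n i)" unfolding IH s2 by simp
    finally show ?thesis .
  qed
qed

context bethe begin

definition P :: "nat \<Rightarrow> real poly" where "P j = char_poly (T_mat \<alpha> d k j)"

lemma T_carrier: "T_mat \<alpha> d k j \<in> carrier_mat j j" unfolding T_mat_def by simp

lemma P_lc: "lead_coeff (P j) = 1"
  using degree_monic_char_poly[OF T_carrier[of j]] unfolding P_def by simp

lemma P_nz: "P j \<noteq> 0" using P_lc[of j] by auto

lemma P_eval: assumes "j \<le> k" "\<And>i. 1 \<le> i \<Longrightarrow> i < j \<Longrightarrow> Fr \<alpha> d k x i \<noteq> 0"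
  shows "poly (P j) x = (\<Prod>i\<in>{1..j}. Fr \<alpha> d k x i)"
  unfolding P_def by (rule T_char[OF assms(1) B9 assms(2)])

definition Z :: "real set" where "Z = (\<Union>j\<in>{1..<k}. {x. poly (P j) x = 0})"

lemma Z_fin: "finite Z" unfolding Z_def using poly_roots_finite[OF P_nz] by auto

lemma Fr_nz: assumes "x \<notin> Z" shows "1 \<le> i \<Longrightarrow> i < k \<Longrightarrow> Fr \<alpha> d k x i \<noteq> 0"
proof (induction i rule: less_induct)
  case (less i)
  have "poly (P i) x = (\<Prod>i\<in>{1..i}. Fr \<alpha> d k x i)" using less by (intro P_eval) auto
  moreover have "poly (P i) x \<noteq> 0" using assms less.prems unfolding Z_def by auto
  ultimately have "(\<Prod>i\<in>{1..i}. Fr \<alpha> d k x i) \<noteq> 0" by simp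
  thus ?case using less.prems by simp
qed

lemma char_A: "char_poly (A_alpha \<alpha> N E) = (\<Prod>j\<in>{1..k-1}. P j ^ (n j - n (j+1))) * P k"
proof (rule poly_eq_cofinite[OF Z_fin])
  fix x assume x: "x \<notin> Z"
  note nz = Fr_nz[OF x]
  have "poly (char_poly (A_alpha \<alpha> N E)) x = (\<Prod>s\<in>{1..k}. Fr \<alpha> d k x s ^ n s)"
    using A_char nz by blast
  also have "\<dots> = (\<Prod>j\<in>{1..<k}. (\<Prod>i\<in>{1..j}. Fr \<alpha> d k x i) ^ (n j - n (j+1))) * (\<Prod>i\<in>{1..k}. Fr \<alpha> d k x i) ^ n k"
    by (rule telescope[symmetric]) (use B6 in auto)
  also have "\<dots> = poly ((\<Prod>j\<in>{1..k-1}. P j ^ (n j - n (j+1))) * P k) x"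
  proof -
    have "{1..k-1} = {1..<k}" using k2 by auto
    moreover have "poly (P j) x = (\<Prod>i\<in>{1..j}. Fr \<alpha> d k x i)" if "j \<in> {1..<k}" for j
      using that nz by (intro P_eval) auto
    moreover have "poly (P k) x = (\<Prod>i\<in>{1..k}. Fr \<alpha> d k x i)" using nz by (intro P_eval) auto
    ultimately show ?thesis using B7 by (simp add: poly_prod)
  qed
  finally show "poly (char_poly (A_alpha \<alpha> N E)) x = poly ((\<Prod>j\<in>{1..k-1}. P j ^ (n j - n (j+1))) * P k) x" .
qed

lemma part1: "spectrum_mset (A_alpha \<alpha> N E) =
   (\<Sum>j\<in>{1..k-1}. repeat_mset (n j - n (j + 1)) (spectrum_mset (T_mat \<alpha> d k j)))
   + spectrum_mset (T_mat \<alpha> d k k)"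
proof -
  have nz: "(\<Prod>j\<in>{1..k-1}. P j ^ (n j - n (j+1))) \<noteq> 0" using P_nz by (simp add: prod_zero_iff)
  show ?thesis unfolding spectrum_mset_def char_A
    using nz P_nz by (simp add: proots_mult proots_prod proots_power P_def)
qed

end



context bethe begin

lemma P0: "poly (P 0) x = 1" using P_eval[of 0 x] by simp

lemma P1: "poly (P 1) x = x - \<alpha>" using P_eval[of 1 x] k2 by simp

lemma recur:
  assumes j: "1 \<le> j" "j + 1 \<le> k"
  shows "poly (P (j+1)) x = (x - \<alpha> * real (d (j+1))) * poly (P j) x - (1-\<alpha>)^2 * cc d k (j+1) * poly (P (j-1)) x"
proof -
  define Q where "Q = [:- (\<alpha> * real (d (j+1))), 1:] * P j - Polynomial.smult ((1-\<alpha>)^2 * cc d k (j+1)) (P (j-1))"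
  have "P (j+1) = Q"
  proof (rule poly_eq_cofinite[OF Z_fin])
    fix y assume y: "y \<notin> Z"
    note nz = Fr_nz[OF y]
    have e1: "poly (P (j+1)) y = (\<Prod>i\<in>{1..j+1}. Fr \<alpha> d k y i)" using nz j by (intro P_eval) auto
    have e2: "poly (P j) y = (\<Prod>i\<in>{1..j}. Fr \<alpha> d k y i)" using nz j by (intro P_eval) auto
    have e3: "poly (P (j-1)) y = (\<Prod>i\<in>{1..j-1}. Fr \<alpha> d k y i)" using nz j by (intro P_eval) auto
    have fj: "Fr \<alpha> d k y j \<noteq> 0" using nz j by simp
    have s1: "{1..j+1} = insert (j+1) {1..j}" by auto
    have s2: "{1..j} = insert j {1..j-1}" using j by auto
    have fr: "Fr \<alpha> d k y (j+1) = y - \<alpha> * real (d (j+1)) - (1 - \<alpha>)^2 * cc d k (j+1) / Fr \<alpha> d k y j"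
      using j by simp
    define R where "R = (\<Prod>i\<in>{1..j-1}. Fr \<alpha> d k y i)"
    have "poly (P (j+1)) y = R * Fr \<alpha> d k y j * Fr \<alpha> d k y (j+1)"
      unfolding e1 s1 R_def using s2 by (simp add: mult_ac)
    also have "\<dots> = (y - \<alpha> * real (d (j+1))) * (R * Fr \<alpha> d k y j) - (1-\<alpha>)^2 * cc d k (j+1) * R"
    proof -
      have "R * Fr \<alpha> d k y j * ((y - \<alpha> * real (d (j+1))) - (1 - \<alpha>)^2 * cc d k (j+1) / Fr \<alpha> d k y j)
        = (y - \<alpha> * real (d (j+1))) * (R * Fr \<alpha> d k y j) - (1 - \<alpha>)^2 * cc d k (j+1) * R * (Fr \<alpha> d k y j / Fr \<alpha> d k y j)"
        by (simp add: algebra_simps)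
      also have "\<dots> = (y - \<alpha> * real (d (j+1))) * (R * Fr \<alpha> d k y j) - (1 - \<alpha>)^2 * cc d k (j+1) * R"
        using fj by simp
      finally show ?thesis unfolding fr .
    qed
    also have "\<dots> = poly Q y"
    proof -
      have "j \<notin> {1..j-1}" using j by simp
      hence "(\<Prod>i\<in>{1..j}. Fr \<alpha> d k y i) = Fr \<alpha> d k y j * R" unfolding s2 R_def by simp
      thus ?thesis unfolding Q_def using e2 e3 R_def by (simp add: algebra_simps)
    qed
    finally show "poly (P (j+1)) y = poly Q y" .
  qed
  hence "poly (P (j+1)) x = poly Q x" by simp
  also have "poly Q x = (x - \<alpha> * real (d (j+1))) * poly (P j) x - (1-\<alpha>)^2 * cc d k (j+1) * poly (P (j-1)) x"
    unfolding Q_def by (simp add: algebra_simps)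
  finally show ?thesis .
qed

definition R :: "nat \<Rightarrow> real set" where "R j = {x. poly (P j) x = 0}"

lemma R_fin: "finite (R j)" unfolding R_def using poly_roots_finite[OF P_nz] .

lemma cc_nonneg: assumes "2 \<le> s" "s \<le> k" shows "cc d k s \<ge> 0"
  using B9[of s] assms by (auto simp: cc_def)

lemma chain: "1 \<le> j \<Longrightarrow> j \<le> k \<Longrightarrow> R j \<noteq> {} \<and> (\<forall>x. x \<ge> Max (R j) \<longrightarrow> poly (P (j-1)) x \<ge> 0)
   \<and> (j \<ge> 2 \<longrightarrow> Max (R (j-1)) \<le> Max (R j))"
proof (induction j rule: nat_induct_at_least)
  case base
  have "R 1 = {\<alpha>}" unfolding R_def using P1 by auto
  thus ?case using P0 by simp
next
  case (Suc j)
  have IH: "R j \<noteq> {}" "\<And>x. x \<ge> Max (R j) \<Longrightarrow> poly (P (j-1)) x \<ge> 0" using Suc by auto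
  define m where "m = Max (R j)"
  have mR: "m \<in> R j" unfolding m_def using IH(1) R_fin by simp
  hence pm: "poly (P j) m = 0" unfolding R_def by simp
  have "poly (P (j+1)) m = - ((1-\<alpha>)^2 * cc d k (j+1) * poly (P (j-1)) m)"
    using recur[of j m] Suc pm by simp
  moreover have "(1-\<alpha>)^2 * cc d k (j+1) * poly (P (j-1)) m \<ge> 0"
    using cc_nonneg[of "j+1"] Suc IH(2)[of m] m_def by simp
  ultimately have "poly (P (j+1)) m \<le> 0" by simp
  then obtain y where y: "y \<ge> m" "poly (P (j+1)) y = 0" using root_after[of "P (j+1)" m] P_lc by auto
  have yR: "y \<in> R (Suc j)" using y unfolding R_def by simp
  hence ne: "R (Suc j) \<noteq> {}" by auto
  have "y \<le> Max (R (Suc j))" using yR R_fin by simp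
  hence mle: "m \<le> Max (R (Suc j))" using y by simp
  have "poly (P j) x \<ge> 0" if x: "x \<ge> Max (R (Suc j))" for x
  proof (cases "x = m")
    case True thus ?thesis using pm by simp
  next
    case False
    hence xm: "x > m" using x mle by simp
    have "poly (P j) x > 0"
    proof (rule pos_after)
      show "lead_coeff (P j) > 0" using P_lc by simp
      fix z assume "z \<ge> x"
      hence "z > m" using xm by simp
      moreover have "w \<le> m" if "w \<in> R j" for w using that R_fin unfolding m_def by simp
      ultimately have "z \<notin> R j" by force
      thus "poly (P j) z \<noteq> 0" unfolding R_def by simp
    qed
    thus ?thesis by simp
  qed
  thus ?case using ne mle m_def by simp
qed

lemma Rle: assumes "1 \<le> j" "j \<le> k" shows "Max (R j) \<le> Max (R k)"
  using assms
proof (induction "k - j" arbitrary: j)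
  case 0 thus ?case by simp
next
  case (Suc t)
  have jk: "j + 1 \<le> k" using Suc.hyps(2) by simp
  have "Max (R j) \<le> Max (R (j+1))" using chain[of "j+1"] Suc.prems jk by simp
  also have "\<dots> \<le> Max (R k)" using Suc.hyps(1)[of "j+1"] Suc.hyps(2) jk by simp
  finally show ?case .
qed

lemma eig_roots: fixes B :: "real mat" shows "B \<in> carrier_mat m m \<Longrightarrow> {x. eigenvalue B x} = {x. poly (char_poly B) x = 0}"
  using eigenvalue_root_char_poly[of B m] by simp

lemma part2: "Max {x. eigenvalue (T_mat \<alpha> d k k) x} = Max {x. eigenvalue (A_alpha \<alpha> N E) x}"
proof -
  have A: "A_alpha \<alpha> N E \<in> carrier_mat N N" unfolding A_alpha_def deg_mat_def adj_mat_def by simp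
  define X where "X = {x. poly (char_poly (A_alpha \<alpha> N E)) x = 0}"
  have e1: "{x. eigenvalue (T_mat \<alpha> d k k) x} = R k" unfolding R_def P_def using eig_roots[OF T_carrier] .
  have e2: "{x. eigenvalue (A_alpha \<alpha> N E) x} = X" unfolding X_def using eig_roots[OF A] .
  have sub1: "R k \<subseteq> X" unfolding X_def R_def char_A by auto
  have sub2: "X \<subseteq> (\<Union>j\<in>{1..k}. R j)"
  proof
    fix x assume "x \<in> X"
    hence "poly ((\<Prod>j\<in>{1..k-1}. P j ^ (n j - n (j+1))) * P k) x = 0" unfolding X_def char_A by simp
    hence "(\<exists>j\<in>{1..k-1}. poly (P j) x = 0) \<or> poly (P k) x = 0" by (auto simp: poly_prod prod_zero_iff)
    thus "x \<in> (\<Union>j\<in>{1..k}. R j)"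
    proof
      assume "\<exists>j\<in>{1..k-1}. poly (P j) x = 0"
      then obtain j where "j \<in> {1..k-1}" "poly (P j) x = 0" by blast
      thus ?thesis unfolding R_def by (intro UN_I[of j]) auto
    next
      assume "poly (P k) x = 0"
      thus ?thesis unfolding R_def using k2 by (intro UN_I[of k]) auto
    qed
  qed
  have Rk: "R k \<noteq> {}" using chain[of k] k2 by simp
  have finX: "finite X" unfolding X_def
    by (rule poly_roots_finite) (use degree_monic_char_poly[OF A] in auto)
  have "Max X \<le> Max (R k)"
  proof -
    have "X \<noteq> {}" using sub1 Rk by auto
    hence "Max X \<in> X" using finX by simp
    then obtain j where j: "j \<in> {1..k}" "Max X \<in> R j" using sub2 by auto
    hence "Max X \<le> Max (R j)" using R_fin by simp
    also have "\<dots> \<le> Max (R k)" using Rle j by simp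
    finally show ?thesis .
  qed
  moreover have "Max (R k) \<le> Max X"
  proof -
    have "Max (R k) \<in> R k" using Rk R_fin[of k] by simp
    hence "Max (R k) \<in> X" using sub1 by blast
    thus ?thesis using finX by simp
  qed
  ultimately show ?thesis unfolding e1 e2 by simp
qed

end

theorem theorem6:
  fixes N :: nat and E :: "nat \<Rightarrow> nat \<Rightarrow> bool" and r k :: nat
    and n d :: "nat \<Rightarrow> nat" and \<alpha> :: real
  assumes bethe: "gen_bethe_tree N E r k"
    and k2: "k \<ge> 2"
    and n_def: "\<forall>j\<in>{1..k}. n j = card {v. v < N \<and> level E r v = k - j + 1}"
    and d_def: "\<forall>j\<in>{1..k}. \<forall>v<N. level E r v = k - j + 1 \<longrightarrow> degree N E v = d j"
    and alpha: "0 \<le> \<alpha>" "\<alpha> < 1"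
  shows "spectrum_mset (A_alpha \<alpha> N E) =
           (\<Sum>j\<in>{1..k-1}. repeat_mset (n j - n (j + 1)) (spectrum_mset (T_mat \<alpha> d k j)))
           + spectrum_mset (T_mat \<alpha> d k k)
         \<and> Max {x. eigenvalue (T_mat \<alpha> d k k) x} = Max {x. eigenvalue (A_alpha \<alpha> N E) x}"
proof -
  interpret bethe N E r k n d \<alpha>
  proof (unfold_locales)
    show "is_tree N E" "r < N" "k = Max (level E r ` {..<N})"
      using bethe unfolding gen_bethe_tree_def by auto
    show "\<And>u v. u<N \<Longrightarrow> v<N \<Longrightarrow> level E r u = level E r v \<Longrightarrow> degree N E u = degree N E v"
      using bethe unfolding gen_bethe_tree_def by blast
    show "\<And>j. j\<in>{1..k} \<Longrightarrow> n j = card {v. v < N \<and> level E r v = k - j + 1}" using n_def by blast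
    show "\<And>j v. j\<in>{1..k} \<Longrightarrow> v<N \<Longrightarrow> level E r v = k - j + 1 \<Longrightarrow> degree N E v = d j" using d_def by blast
  qed (use k2 alpha in auto)
  show ?thesis using part1 part2 by blast
qed

end
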